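(* Let $m>n>0$ be relatively prime integers and $(r,s)\in\mathbb{Z}^2$. Then $(r,s)=\beta(m,\,m-n)$ if and only if $(s,\,r-s)=\beta(2m-n,\,m)$.
   Context: For relatively prime integers $a>b>0$, $\beta(a,b)$ denotes the Bézout coefficients given by the Euclidean algorithm: with $a=q_1b+r_1$, $b=q_2r_1+r_2$, $\dots$, $r_{k-2}=q_kr_{k-1}+r_k$, $r_{k-1}=1$, $r_k=0$ ($r_{-1}=a$, $r_0=b$), write $\begin{pmatrix}a\\ b\end{pmatrix}=M\begin{pmatrix}1\\0\end{pmatrix}$ with $M=\prod_{i=1}^k\begin{pmatrix}q_i&1\\1&0\end{pmatrix}$; then $\beta(a,b)$ is the first row of $M^{-1}$, and $\beta(a,b)=(r,s)$ satisfies $ra+sb=1$. *)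

theory Defs
  imports "HOL-Analysis.Analysis"
begin

function euclid_quots :: "int \<Rightarrow> int \<Rightarrow> int list" where
  "euclid_quots a b = (if b \<le> 0 then [] else (a div b) # euclid_quots b (a mod b))"
  by auto
termination
  by (relation "Wellfounded.measure (\<lambda>(a, b). nat b)") auto

definition qmat :: "int \<Rightarrow> int^2^2" where
  "qmat q = (\<chi> i j. if i = 1 \<and> j = 1 then q else if i = 2 \<and> j = 2 then 0 else 1)"

definition euclid_M :: "int \<Rightarrow> int \<Rightarrow> int^2^2" where
  "euclid_M a b = foldr (\<lambda>q A. qmat q ** A) (euclid_quots a b) (mat 1)"

definition beta :: "int \<Rightarrow> int \<Rightarrow> int \<times> int" where
  "beta a b = (matrix_inv (euclid_M a b) $ 1 $ 1, matrix_inv (euclid_M a b) $ 1 $ 2)"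

end

theory Submission
  imports Defs
begin

lemma inv_unique:
  fixes A B :: "int^2^2"
  assumes "A ** B = mat 1" "B ** A = mat 1"
  shows "matrix_inv A = B"
proof -
  have ex: "A ** matrix_inv A = mat 1 \<and> matrix_inv A ** A = mat 1"
    unfolding matrix_inv_def by (rule someI[of _ B]) (use assms in auto)
  have "matrix_inv A = (B ** A) ** matrix_inv A" using assms by (simp add: matrix_mul_lid)
  also have "\<dots> = B ** (A ** matrix_inv A)" by (simp add: matrix_mul_assoc)
  also have "\<dots> = B" using ex by (simp add: matrix_mul_rid)
  finally show ?thesis .
qed

definition qinv :: "int \<Rightarrow> int^2^2" where
  "qinv q = (\<chi> i j. if i = 1 \<and> j = 1 then 0 else if i = 2 \<and> j = 2 then -q else 1)"

lemma qmat_qinv: "qmat q ** qinv q = mat 1" "qinv q ** qmat q = mat 1"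
  by (simp_all add: qmat_def qinv_def matrix_matrix_mult_def vec_eq_iff forall_2 sum_2 mat_def)

lemma invertible_M: "invertible (euclid_M a b)"
proof -
  have "invertible (foldr (\<lambda>q A. qmat q ** A) xs (mat 1 :: int^2^2))" for xs
  proof (induction xs)
    case Nil then show ?case unfolding invertible_def by (auto intro!: exI[of _ "mat 1"] simp: matrix_mul_lid)
  next
    case (Cons x xs)
    have "invertible (qmat x)" unfolding invertible_def using qmat_qinv by blast
    then show ?case using Cons invertible_mult by auto
  qed
  then show ?thesis unfolding euclid_M_def .
qed

theorem lemma2p3:
  fixes m n r s :: int
  assumes "m > n" and "n > 0" and "coprime m n"
  shows "(r, s) = beta m (m - n) \<longleftrightarrow> (s, r - s) = beta (2 * m - n) m"
proof -
  have q: "euclid_quots (2 * m - n) m = 1 # euclid_quots m (m - n)"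
  proof -
    have e: "2 * m - n = (m - n) + m" by simp
    have d0: "(m - n) div m = 0" "(m - n) mod m = m - n"
      using div_pos_pos_trivial[of "m-n" m] mod_pos_pos_trivial[of "m-n" m] assms by linarith+
    have "((m - n) + m) div m = 1" using d0 assms by (simp only: div_add_self2)
    moreover have "((m - n) + m) mod m = m - n" using d0 by (simp only: mod_add_self2)
    ultimately have "(2 * m - n) div m = 1" "(2 * m - n) mod m = m - n" by (simp_all only: e)
    then show ?thesis using assms by (subst euclid_quots.simps) simp
  qed
  define M where "M = euclid_M m (m - n)"
  define N where "N = matrix_inv M"
  have MN: "M ** N = mat 1 \<and> N ** M = mat 1"
    using invertible_M[of m "m-n"] unfolding N_def M_def invertible_def matrix_inv_def
    by (rule someI_ex)
  have M': "euclid_M (2 * m - n) m = qmat 1 ** M"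
    unfolding euclid_M_def M_def q by simp
  have "matrix_inv (qmat 1 ** M) = N ** qinv 1"
  proof (rule inv_unique)
    show "qmat 1 ** M ** (N ** qinv 1) = mat 1"
      by (metis MN matrix_mul_assoc matrix_mul_lid qmat_qinv(1))
    show "N ** qinv 1 ** (qmat 1 ** M) = mat 1"
      by (metis MN matrix_mul_assoc matrix_mul_lid qmat_qinv(2))
  qed
  then have b2: "beta (2 * m - n) m = (N $ 1 $ 2, N $ 1 $ 1 - N $ 1 $ 2)"
    unfolding beta_def M'
    by (simp add: qinv_def matrix_matrix_mult_def sum_2)
  have b1: "beta m (m - n) = (N $ 1 $ 1, N $ 1 $ 2)"
    unfolding beta_def N_def M_def by simp
  show ?thesis unfolding b1 b2 by auto
qed

end
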